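(* Let $T:X\to Y$ be a linear mapping between finite-dimensional Euclidean spaces and let $C\subset X$ be a strictly convex cone with $\operatorname{Ker}T\cap\operatorname{int}C\neq\emptyset$. Define the multifunction $F:\operatorname{Im}T\rightrightarrows X$ by $F(v)=\{u\in X: Tu=v\}\cap C$. Then $F$ is lower semicontinuous at every non-zero point $v\in\operatorname{dom}F$. Moreover, if $T(C)$ is closed, then there exists $\tau>0$ such that $$T(C)\cap\bar B_Y\subset \tau\, T(C\cap\bar B_X).$$
   Context: $\bar B_X,\bar B_Y$ are closed unit balls. $\operatorname{dom}F=\{v:F(v)\ne\emptyset\}$. $F$ is lower semicontinuous at $\bar v\in\operatorname{dom}F$ if for every open $V\subset X$ with $F(\bar v)\cap V\neq\emptyset$ there is $\varepsilon>0$ with $F(v)\cap V\neq\emptyset$ for all $v\in\operatorname{Im}T$ with $\|v-\bar v\|<\varepsilon$. A cone is regular if pointed, closed, convex, with nonempty interior; a regular cone is strictly convex if every face other than the cone itself and $\{0\}$ has dimension one (a face being a convex $\mathcal F\subset C$ such that $x,y\in C$, $\lambda x+(1-\lambda)y\in\mathcal F$ for some $0<\lambda<1$ implies $x,y\in\mathcal F$). *)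

theory Defs
  imports "HOL-Analysis.Analysis"
begin

definition regular_cone :: "'a::euclidean_space set \<Rightarrow> bool" where
  "regular_cone C \<longleftrightarrow> cone C \<and> C \<inter> uminus ` C = {0} \<and> closed C \<and> convex C
     \<and> interior C \<noteq> {}"

definition strictly_convex_cone :: "'a::euclidean_space set \<Rightarrow> bool" where
  "strictly_convex_cone C \<longleftrightarrow> regular_cone C \<and>
     (\<forall>F. F face_of C \<and> F \<noteq> {} \<and> F \<noteq> C \<and> F \<noteq> {0} \<longrightarrow> aff_dim F = 1)"

definition lsc_at :: "'b::metric_space set \<Rightarrow> ('b \<Rightarrow> 'a::topological_space set) \<Rightarrow> 'b \<Rightarrow> bool" where
  "lsc_at D F vbar \<longleftrightarrow> (\<forall>V. open V \<and> F vbar \<inter> V \<noteq> {} \<longrightarrow>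
     (\<exists>\<epsilon>>0. \<forall>v\<in>D. dist v vbar < \<epsilon> \<longrightarrow> F v \<inter> V \<noteq> {}))"

end

theory Submission
  imports Defs
begin

lemma cone_add_mem:
  assumes "cone C" "convex C" "x \<in> C" "y \<in> C"
  shows "x + y \<in> C"
proof -
  have "(1/2) *\<^sub>R x + (1/2) *\<^sub>R y \<in> C"
    using assms(2-4) by (simp add: convex_def)
  then have "2 *\<^sub>R ((1/2) *\<^sub>R x + (1/2) *\<^sub>R y) \<in> C"
    using assms(1) mem_cone by fastforce
  then show ?thesis by (simp add: scaleR_add_right)
qed

lemma rinv:
  fixes T :: "'a::euclidean_space \<Rightarrow> 'b::euclidean_space"
  assumes "linear T"
  obtains g M where "M > 0" "\<And>w. w \<in> range T \<Longrightarrow> T (g w) = w"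
    "\<And>w. norm (g w) \<le> M * norm w"
proof -
  obtain g where g: "linear g" "\<forall>v\<in>T ` UNIV. T (g v) = v"
    using linear_exists_right_inverse_on[OF assms subspace_UNIV] by blast
  obtain M where "M > 0" "\<And>x. norm (g x) \<le> M * norm x"
    using linear_bounded_pos[OF g(1)] by blast
  then show ?thesis using that g(2) by blast
qed

theorem lemma2:
  fixes T :: "'a::euclidean_space \<Rightarrow> 'b::euclidean_space"
    and C :: "'a set"
    and F :: "'b \<Rightarrow> 'a set"
  assumes "linear T"
    and "strictly_convex_cone C"
    and "{x. T x = 0} \<inter> interior C \<noteq> {}"
    and F_def: "F = (\<lambda>v. {u. T u = v} \<inter> C)"
  shows "(\<forall>v\<in>range T. v \<noteq> 0 \<and> F v \<noteq> {} \<longrightarrow> lsc_at (range T) F v)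
    \<and> (closed (T ` C) \<longrightarrow>
         (\<exists>\<tau>>0. T ` C \<inter> cball 0 1 \<subseteq> (\<lambda>y. \<tau> *\<^sub>R y) ` (T ` (C \<inter> cball 0 1))))"
proof -
  have cC: "cone C" and cvC: "convex C"
    using assms(2) by (auto simp: strictly_convex_cone_def regular_cone_def)
  obtain k where k0: "T k = 0" and kint: "k \<in> interior C" using assms(3) by blast
  obtain r where r: "r > 0" "ball k r \<subseteq> C"
    using kint by (meson mem_interior)
  obtain M g where M: "M > 0" and gT: "\<And>w. w \<in> range T \<Longrightarrow> T (g w) = w"
    and gM: "\<And>w. norm (g w) \<le> M * norm w"
    using rinv[OF assms(1)] by metis
  have lin: "T (a + b) = T a + T b" "T (c *\<^sub>R a) = c *\<^sub>R T a" "T (a - b) = T a - T b" for a b c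
    using assms(1) by (simp_all add: linear_add linear_scale linear_diff)
  have intp: "x + s *\<^sub>R k \<in> interior C" if "x \<in> C" "s > 0" for x s
  proof -
    have "ball (x + s *\<^sub>R k) (s * r) \<subseteq> C"
    proof
      fix y assume y: "y \<in> ball (x + s *\<^sub>R k) (s * r)"
      have "dist k ((1/s) *\<^sub>R (y - x)) < r"
      proof -
        have "dist k ((1/s) *\<^sub>R (y - x)) = norm ((1/s) *\<^sub>R (s *\<^sub>R k - (y - x)))"
          using that(2) by (simp add: dist_norm algebra_simps)
        also have "\<dots> = \<bar>1/s\<bar> * norm ((x + s *\<^sub>R k) - y)"
        proof -
          have eq: "s *\<^sub>R k - (y - x) = (x + s *\<^sub>R k) - y" by (simp add: algebra_simps)
          show ?thesis by (simp only: eq norm_scaleR)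
        qed
        also have "\<dots> = (1/s) * norm ((x + s *\<^sub>R k) - y)" using that(2) by simp
        also have "\<dots> < (1/s) * (s * r)"
          using y that(2) by (intro mult_strict_left_mono) (auto simp: dist_norm)
        also have "\<dots> = r" using that(2) by simp
        finally show ?thesis .
      qed
      then have "(1/s) *\<^sub>R (y - x) \<in> C" using r by auto
      then have "s *\<^sub>R ((1/s) *\<^sub>R (y - x)) \<in> C" by (rule mem_cone[OF cC]) (use that(2) in auto)
      then have "y - x \<in> C" using that(2) by simp
      from cone_add_mem[OF cC cvC that(1) this] show "y \<in> C" by simp
    qed
    moreover have "x + s *\<^sub>R k \<in> ball (x + s *\<^sub>R k) (s * r)" using r(1) that(2) by simp
    ultimately show ?thesis using interior_maximal[OF _ open_ball] by blast
  qed
  have part1: "lsc_at (range T) F v" if v: "v \<in> range T" "F v \<noteq> {}" for v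
    unfolding lsc_at_def
  proof (intro allI impI)
    fix V :: "'a set" assume V: "open V \<and> F v \<inter> V \<noteq> {}"
    then obtain u0 where u0: "u0 \<in> C" "T u0 = v" "u0 \<in> V" using F_def by auto
    obtain e where e: "e > 0" "ball u0 e \<subseteq> V" using V u0(3) open_contains_ball by blast
    define s where "s = e / (2 * (norm k + 1))"
    have nk: "norm k + 1 > 0" by (simp add: add_nonneg_pos)
    have s: "s > 0" unfolding s_def using e nk by simp
    define u1 where "u1 = u0 + s *\<^sub>R k"
    have "norm (s *\<^sub>R k) < e"
    proof -
      have "norm (s *\<^sub>R k) = s * norm k" using s by simp
      also have "\<dots> \<le> s * (norm k + 1)" using s by simp
      also have "\<dots> = e/2" unfolding s_def using nk by (simp add: field_simps)
      finally show ?thesis using e by simp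
    qed
    then have "u1 \<in> V" using e unfolding u1_def by (auto simp: dist_norm)
    moreover have "u1 \<in> interior C" unfolding u1_def using intp u0(1) s by blast
    ultimately obtain d where d: "d > 0" "ball u1 d \<subseteq> interior C \<inter> V"
      using V open_contains_ball[of "interior C \<inter> V"] by blast
    have Tu1: "T u1 = v" unfolding u1_def using lin k0 u0 by simp
    show "\<exists>\<epsilon>>0. \<forall>v'\<in>range T. dist v' v < \<epsilon> \<longrightarrow> F v' \<inter> V \<noteq> {}"
    proof (intro exI[of _ "d / M"] conjI ballI impI)
      show "d / M > 0" using d M by simp
      fix v' assume v': "v' \<in> range T" "dist v' v < d / M"
      have w: "v' - v \<in> range T"
      proof -
        obtain a b where "v' = T a" "v = T b" using v'(1) v(1) by blast
        then have "v' - v = T (a - b)" using lin(3) by simp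
        then show ?thesis by blast
      qed
      define u' where "u' = u1 + g (v' - v)"
      have "norm (g (v' - v)) < d"
      proof -
        have "norm (g (v' - v)) \<le> M * norm (v' - v)" by (rule gM)
        also have "\<dots> < M * (d / M)" using v'(2) M by (intro mult_strict_left_mono) (auto simp: dist_norm)
        finally show ?thesis using M by simp
      qed
      then have "u' \<in> ball u1 d" unfolding u'_def by (simp add: dist_norm)
      then have "u' \<in> C \<inter> V" using d interior_subset by blast
      moreover have "T u' = v'" unfolding u'_def using lin Tu1 gT[OF w] by simp
      ultimately show "F v' \<inter> V \<noteq> {}" using F_def by auto
    qed
  qed
  have part2: "\<exists>\<tau>>0. T ` C \<inter> cball 0 1 \<subseteq> (\<lambda>y. \<tau> *\<^sub>R y) ` (T ` (C \<inter> cball 0 1))"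
  proof -
    define c where "c = norm k + r"
    have c: "c > 0" using r by (simp add: c_def add_nonneg_pos)
    define \<tau> where "\<tau> = 2 * M * c / r"
    have tau: "\<tau> > 0" using M c r by (simp add: \<tau>_def)
    show ?thesis
    proof (intro exI[of _ \<tau>] conjI subsetI)
      show "\<tau> > 0" by (rule tau)
      fix y assume y: "y \<in> T ` C \<inter> cball 0 1"
      then have yr: "y \<in> range T" and yn: "norm y \<le> 1" by auto
      define u where "u = k + (r / (2 * M)) *\<^sub>R g y"
      have ng: "norm ((r / (2 * M)) *\<^sub>R g y) \<le> r / 2"
      proof -
        have "norm ((r / (2 * M)) *\<^sub>R g y) = (r / (2 * M)) * norm (g y)"
          using r M by simp
        also have "\<dots> \<le> (r / (2 * M)) * (M * norm y)"
          using r M gM by (intro mult_left_mono) auto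
        also have "\<dots> = r/2 * norm y" using M by simp
        also have "\<dots> \<le> r/2" using yn r by (simp add: mult_left_le)
        finally show ?thesis .
      qed
      then have "u \<in> ball k r" unfolding u_def using r by (simp add: dist_norm)
      then have uC: "u \<in> C" using r by blast
      have nu: "norm u \<le> c"
      proof -
        have "norm u \<le> norm k + norm ((r / (2 * M)) *\<^sub>R g y)" unfolding u_def by (rule norm_triangle_ineq)
        then show ?thesis using ng r unfolding c_def by simp
      qed
      define u' where "u' = (1 / c) *\<^sub>R u"
      have "u' \<in> C" unfolding u'_def using mem_cone[OF cC uC] c by simp
      moreover have "norm u' \<le> 1" unfolding u'_def using nu c by (simp add: field_simps)
      moreover have "T u = (r / (2 * M)) *\<^sub>R y" unfolding u_def using lin k0 gT[OF yr] by simp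
      then have "\<tau> *\<^sub>R T u' = y"
        unfolding u'_def \<tau>_def using lin r M c by (simp add: field_simps)
      ultimately show "y \<in> (\<lambda>y. \<tau> *\<^sub>R y) ` (T ` (C \<inter> cball 0 1))" by force
    qed
  qed
  show ?thesis using part1 part2 by blast
qed

end
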